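(* Let $d>2$, let $\alpha,\lambda\in\overline{\mathbb Q}$, and let $|\cdot|_v$ be an absolute value on $\overline{\mathbb Q}$. If $|\alpha|_v\ge2$ and $|\lambda|_v\le\frac12$, then for each $n_0\ge0$, $$\left|\lim_{n\to\infty}\frac{\log M_{n,v}}{d^n}-\frac{\log M_{n_0,v}}{d^{n_0}}\right|\le\frac{\log 2}{d^{n_0}(d-1)}.$$
   Context: Define $A_0=\alpha$, $B_0=1$, and for $n\ge0$, $A_{n+1}=A_n^d+\lambda B_n^d$, $B_{n+1}=A_nB_n^{d-1}$ (so $[A_n:B_n]$ is the $n$-th iterate of $\alpha$ under $z\mapsto(z^d+\lambda)/z$). Set $M_{n,v}=\max\{|A_n|_v,|B_n|_v\}$. *)

theory Defs
  imports "HOL-Computational_Algebra.Computational_Algebra"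
begin

definition Qbar :: "complex set" where
  "Qbar = {z. algebraic z}"

definition is_abs_value_Qbar :: "(complex \<Rightarrow> real) \<Rightarrow> bool" where
  "is_abs_value_Qbar v \<longleftrightarrow>
     (\<forall>x\<in>Qbar. v x \<ge> 0) \<and>
     (\<forall>x\<in>Qbar. v x = 0 \<longleftrightarrow> x = 0) \<and>
     (\<forall>x\<in>Qbar. \<forall>y\<in>Qbar. v (x * y) = v x * v y) \<and>
     (\<forall>x\<in>Qbar. \<forall>y\<in>Qbar. v (x + y) \<le> v x + v y)"

text \<open>Homogeneous iteration of z \<mapsto> (z^d + \<lambda>)/z: the pair (A_n, B_n).\<close>
fun AB :: "nat \<Rightarrow> complex \<Rightarrow> complex \<Rightarrow> nat \<Rightarrow> complex \<times> complex" where
  "AB d alpha lam 0 = (alpha, 1)"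
| "AB d alpha lam (Suc n) =
     (let (a, b) = AB d alpha lam n in (a ^ d + lam * b ^ d, a * b ^ (d - 1)))"

definition A_seq :: "nat \<Rightarrow> complex \<Rightarrow> complex \<Rightarrow> nat \<Rightarrow> complex" where
  "A_seq d alpha lam n = fst (AB d alpha lam n)"

definition B_seq :: "nat \<Rightarrow> complex \<Rightarrow> complex \<Rightarrow> nat \<Rightarrow> complex" where
  "B_seq d alpha lam n = snd (AB d alpha lam n)"

definition M_seq :: "(complex \<Rightarrow> real) \<Rightarrow> nat \<Rightarrow> complex \<Rightarrow> complex \<Rightarrow> nat \<Rightarrow> real" where
  "M_seq v d alpha lam n = max (v (A_seq d alpha lam n)) (v (B_seq d alpha lam n))"

end

theory Submission imports Defs begin
interpretation Q: vector_space "\<lambda>(r::rat) (z::complex). of_rat r * z"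
  by unfold_locales (auto simp: algebra_simps of_rat_add of_rat_mult)

lemma Q_span_mult:
  assumes "a \<in> Q.span S" "b \<in> Q.span T"
  shows "a * b \<in> Q.span {s * t | s t. s \<in> S \<and> t \<in> T}"
proof -
  from assms(1) obtain t1 r where t1: "finite t1" "t1 \<subseteq> S" "a = (\<Sum>x\<in>t1. of_rat (r x) * x)"
    unfolding Q.span_explicit by blast
  from assms(2) obtain t2 q where t2: "finite t2" "t2 \<subseteq> T" "b = (\<Sum>x\<in>t2. of_rat (q x) * x)"
    unfolding Q.span_explicit by blast
  have "a * b = (\<Sum>x\<in>t1. \<Sum>y\<in>t2. of_rat (r x * q y) * (x * y))"
    by (simp add: t1(3) t2(3) sum_distrib_left sum_distrib_right of_rat_mult algebra_simps)
  also have "\<dots> \<in> Q.span {s * t | s t. s \<in> S \<and> t \<in> T}"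
    using t1(2) t2(2) by (intro Q.span_sum Q.span_scale Q.span_base) blast
  finally show ?thesis .
qed

lemma powspan_alg:
  assumes T: "finite T" and sp: "\<And>n. z ^ n \<in> Q.span T"
  shows "algebraic z"
proof (cases "inj_on (\<lambda>k. z ^ k) {..card T}")
  case False
  then obtain i j where ij: "i < j" "z ^ i = z ^ j"
    unfolding inj_on_def by (metis linorder_neqE_nat)
  define p :: "complex poly" where "p = monom 1 j - monom 1 i"
  show ?thesis
  proof (rule algebraicI[of p])
    show "coeff p k \<in> \<int>" for k by (auto simp: p_def coeff_monom)
    have "coeff p j = 1" using ij by (simp add: p_def coeff_monom)
    thus "p \<noteq> 0" by auto
    show "poly p z = 0" using ij by (simp add: p_def poly_monom)
  qed
next
  case True
  define S where "S = (\<lambda>k. z ^ k) ` {..card T}"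
  have cS: "card S = card T + 1" using True by (simp add: S_def card_image)
  have "S \<subseteq> Q.span T" using sp by (auto simp: S_def)
  hence "Q.dependent S"
    using Q.independent_span_bound[OF T, of S] cS by auto
  moreover have fS: "finite S" by (simp add: S_def)
  ultimately obtain u where u: "\<exists>v\<in>S. u v \<noteq> 0" "(\<Sum>v\<in>S. of_rat (u v) * v) = 0"
    using Q.dependent_finite by auto
  define p :: "complex poly" where
    "p = (\<Sum>k\<le>card T. monom (of_rat (u (z ^ k))) k)"
  have cp: "coeff p k = (if k \<le> card T then of_rat (u (z ^ k)) else 0)" for k
    by (simp add: p_def coeff_sum coeff_monom)
  show ?thesis
  proof (rule algebraicI'[of p])
    show "coeff p k \<in> \<rat>" for k by (simp add: cp)
    from u(1) obtain k where k: "k \<le> card T" "u (z ^ k) \<noteq> 0" by (auto simp: S_def)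
    hence "coeff p k \<noteq> 0" by (simp add: cp)
    thus "p \<noteq> 0" by auto
    have "poly p z = (\<Sum>k\<le>card T. of_rat (u (z ^ k)) * z ^ k)"
      by (simp add: p_def poly_sum poly_monom)
    also have "\<dots> = (\<Sum>v\<in>S. of_rat (u v) * v)"
      unfolding S_def by (subst sum.reindex[OF True]) simp
    finally show "poly p z = 0" using u(2) by simp
  qed
qed

lemma alg_powspan:
  assumes "algebraic z"
  shows "\<exists>T. finite T \<and> (\<forall>n. z ^ n \<in> Q.span T)"
proof -
  from assms obtain p where p: "\<And>i. coeff p i \<in> \<int>" "p \<noteq> 0" "poly p z = 0"
    by (erule algebraicE)
  define d where "d = degree p"
  define c where "c = lead_coeff p"
  have c0: "c \<noteq> 0" using p(2) by (simp add: c_def)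
  have "0 = (\<Sum>i\<le>d. coeff p i * z ^ i)" using p(3) by (simp add: poly_altdef d_def)
  also have "\<dots> = (\<Sum>i<d. coeff p i * z ^ i) + c * z ^ d"
    by (simp add: lessThan_Suc_atMost[symmetric] c_def d_def)
  finally have h: "c * z ^ d = - (\<Sum>i<d. coeff p i * z ^ i)"
    by (simp add: eq_neg_iff_add_eq_0 add.commute)
  have "z ^ d = - (\<Sum>i<d. coeff p i * z ^ i) / c"
    using c0 h by (simp add: field_simps)
  also have "\<dots> = - (\<Sum>i<d. (coeff p i / c) * z ^ i)"
    by (simp add: sum_divide_distrib)
  finally have zd: "z ^ d = - (\<Sum>i<d. (coeff p i / c) * z ^ i)" .
  have rat: "coeff p i / c \<in> \<rat>" for i
    using p(1) unfolding c_def by (intro Rats_divide) (auto intro: subsetD[OF Ints_subset_Rats])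
  define T where "T = (\<lambda>i. z ^ i) ` {..<d}"
  have "z ^ n \<in> Q.span T" for n
  proof (induction n rule: less_induct)
    case (less n)
    show ?case
    proof (cases "n < d")
      case True thus ?thesis by (intro Q.span_base) (auto simp: T_def)
    next
      case False
      have "z ^ n = z ^ (n - d) * z ^ d" using False by (simp add: power_add[symmetric])
      also have "\<dots> = - (\<Sum>i<d. (coeff p i / c) * z ^ (n - d + i))"
        by (simp add: zd sum_distrib_left power_add algebra_simps)
      also have "\<dots> \<in> Q.span T"
      proof (intro Q.span_neg Q.span_sum)
        fix i assume i: "i \<in> {..<d}"
        obtain r where r: "coeff p i / c = of_rat r" using rat[of i] by (auto elim: Rats_cases)
        have "z ^ (n - d + i) \<in> Q.span T" using i False by (intro less) auto
        thus "coeff p i / c * z ^ (n - d + i) \<in> Q.span T" unfolding r by (rule Q.span_scale)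
      qed
      finally show ?thesis .
    qed
  qed
  thus ?thesis by (auto simp: T_def)
qed

lemma alg_plus_times:
  fixes x y :: complex
  assumes "algebraic x" "algebraic y"
  shows "algebraic (x + y) \<and> algebraic (x * y)"
proof -
  obtain X where X: "finite X" "\<And>n. x ^ n \<in> Q.span X" using alg_powspan[OF assms(1)] by blast
  obtain Y where Y: "finite Y" "\<And>n. y ^ n \<in> Q.span Y" using alg_powspan[OF assms(2)] by blast
  define P where "P = {s * t | s t. s \<in> X \<and> t \<in> Y}"
  have fP: "finite P"
  proof -
    have "P = (\<lambda>(s,t). s * t) ` (X \<times> Y)" by (auto simp: P_def)
    thus ?thesis using X(1) Y(1) by simp
  qed
  have xy: "x ^ i * y ^ j \<in> Q.span P" for i j
    unfolding P_def by (rule Q_span_mult[OF X(2) Y(2)])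
  have "(x + y) ^ n \<in> Q.span P" for n
  proof -
    have "(x + y) ^ n = (\<Sum>k\<le>n. of_rat (of_nat (n choose k)) * (x ^ k * y ^ (n - k)))"
      by (simp add: binomial_ring mult.assoc)
    also have "\<dots> \<in> Q.span P" by (intro Q.span_sum Q.span_scale xy)
    finally show ?thesis .
  qed
  moreover have "(x * y) ^ n \<in> Q.span P" for n
    using xy[of n n] by (simp add: power_mult_distrib)
  ultimately show ?thesis using powspan_alg[OF fP] by blast
qed

lemma seq_bound:
  fixes L :: "nat \<Rightarrow> real" and c r :: real
  assumes r: "r > 1" and c: "c \<ge> 0"
    and step: "\<And>n. \<bar>L (Suc n) - L n\<bar> \<le> c / r ^ Suc n"
  shows "convergent L \<and> \<bar>lim L - L n0\<bar> \<le> c / (r ^ n0 * (r - 1))"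
proof -
  define D where "D k = L (Suc k) - L k" for k
  define g where "g k = (c / r) * (1 / r) ^ k" for k
  have gk: "g k = c / r ^ Suc k" for k by (simp add: g_def power_one_over)
  have sg: "summable g" unfolding g_def using r by (intro summable_mult summable_geometric) auto
  have nD: "norm (D k) \<le> g k" for k using step[of k] by (simp add: D_def gk)
  have sD: "summable D" by (rule summable_comparison_test'[OF sg]) (use nD in auto)
  have Ln: "L n = L 0 + (\<Sum>k<n. D k)" for n
    by (simp add: D_def sum_lessThan_telescope)
  have "(\<lambda>n. L 0 + (\<Sum>k<n. D k)) \<longlonglongrightarrow> L 0 + suminf D"
    by (intro tendsto_add tendsto_const summable_LIMSEQ sD)
  moreover have "(\<lambda>n. L 0 + (\<Sum>k<n. D k)) = L" by (rule ext, rule Ln[symmetric])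
  ultimately have "L \<longlonglongrightarrow> L 0 + suminf D" by simp
  hence conv: "convergent L" and lim: "lim L = L 0 + suminf D"
    by (auto simp: convergent_def limI)
  have "lim L - L n0 = (\<Sum>k. D (k + n0))"
    using suminf_split_initial_segment[OF sD, of n0] lim Ln[of n0] by simp
  also have "\<bar>\<dots>\<bar> \<le> (\<Sum>k. g (k + n0))"
  proof -
    have sg': "summable (\<lambda>k. g (k + n0))" using sg by (simp add: summable_iff_shift)
    have "norm (\<Sum>k. D (k + n0)) \<le> (\<Sum>k. g (k + n0))"
      by (rule norm_suminf_le) (use nD sg' in auto)
    thus ?thesis by simp
  qed
  also have "(\<Sum>k. g (k + n0)) = (c / r ^ Suc n0) * (\<Sum>k. (1 / r) ^ k)"
  proof -
    have "(\<lambda>k. g (k + n0)) = (\<lambda>k. (c / r ^ Suc n0) * (1 / r) ^ k)"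
      using r by (auto simp: g_def power_add field_simps)
    moreover have "(\<Sum>k. (c / r ^ Suc n0) * (1 / r) ^ k) = (c / r ^ Suc n0) * (\<Sum>k. (1 / r) ^ k)"
      by (rule suminf_mult[OF summable_geometric]) (use r in auto)
    ultimately show ?thesis by (simp only:)
  qed
  also have "\<dots> = c / (r ^ n0 * (r - 1))"
    using r by (subst suminf_geometric) (auto simp: field_simps)
  finally show ?thesis using conv by simp
qed

lemma alg_pow: "algebraic (x::complex) \<Longrightarrow> algebraic (x ^ n)"
  by (induction n) (auto dest: alg_plus_times)

lemma A_Suc: "A_seq d a l (Suc n) = A_seq d a l n ^ d + l * B_seq d a l n ^ d"
  and B_Suc: "B_seq d a l (Suc n) = A_seq d a l n * B_seq d a l n ^ (d - 1)"
  by (simp_all add: A_seq_def B_seq_def split: prod.split)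

lemma A0: "A_seq d a l 0 = a" and B0: "B_seq d a l 0 = 1"
  by (simp_all add: A_seq_def B_seq_def)

lemma AB_alg:
  assumes "algebraic a" "algebraic l"
  shows "algebraic (A_seq d a l n) \<and> algebraic (B_seq d a l n)"
proof (induction n)
  case 0 thus ?case using assms by (simp add: A0 B0)
next
  case (Suc n)
  thus ?case using assms unfolding A_Suc B_Suc
    by (meson alg_plus_times alg_pow)
qed

context
  fixes v :: "complex \<Rightarrow> real"
  assumes v: "is_abs_value_Qbar v"
begin

lemma v_nonneg: "algebraic x \<Longrightarrow> v x \<ge> 0"
  using v by (auto simp: is_abs_value_Qbar_def Qbar_def)
lemma v_zero: "algebraic x \<Longrightarrow> v x = 0 \<longleftrightarrow> x = 0"
  using v by (auto simp: is_abs_value_Qbar_def Qbar_def)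
lemma v_mult: "algebraic x \<Longrightarrow> algebraic y \<Longrightarrow> v (x * y) = v x * v y"
  using v by (auto simp: is_abs_value_Qbar_def Qbar_def)
lemma v_add: "algebraic x \<Longrightarrow> algebraic y \<Longrightarrow> v (x + y) \<le> v x + v y"
  using v by (auto simp: is_abs_value_Qbar_def Qbar_def)

lemma v_one: "v 1 = 1"
proof -
  have "v 1 = v 1 * v 1" using v_mult[of 1 1] by simp
  moreover have "v 1 \<noteq> 0" using v_zero[of 1] by simp
  ultimately show ?thesis by simp
qed

lemma v_neg: "algebraic x \<Longrightarrow> v (- x) = v x"
proof -
  assume x: "algebraic x"
  have m1: "algebraic (-1 :: complex)" by (rule algebraic_minus) simp
  have "v (-1) * v (-1) = 1" using v_mult[OF m1 m1] v_one by simp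
  moreover have "v (-1) \<ge> 0" using v_nonneg[OF m1] .
  ultimately have "(v (-1) - 1) * (v (-1) + 1) = 0" "v (-1) + 1 > 0"
    by (simp_all add: algebra_simps)
  hence "v (-1) = 1" by simp
  thus ?thesis using v_mult[OF m1 x] by simp
qed

lemma v_pow: "algebraic x \<Longrightarrow> v (x ^ n) = v x ^ n"
  by (induction n) (auto simp: v_one v_mult alg_pow)

lemma v_rev: "algebraic x \<Longrightarrow> algebraic y \<Longrightarrow> v (x + y) \<ge> v x - v y"
proof -
  assume x: "algebraic x" and y: "algebraic y"
  have xy: "algebraic (x + y)" using alg_plus_times[OF x y] by simp
  have "v x = v ((x + y) + (- y))" by simp
  also have "\<dots> \<le> v (x + y) + v (- y)" using v_add[OF xy algebraic_minus[OF y]] .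
  finally show ?thesis using v_neg[OF y] by simp
qed

end

lemma real_step:
  fixes a b l x :: real and d :: nat
  assumes d: "d > 2" and a: "a > 0" and b: "b \<ge> 0" "2 * b \<le> a" and l: "0 \<le> l" "l \<le> 1/2"
    and x1: "x \<le> a ^ d + l * b ^ d" and x2: "x \<ge> a ^ d - l * b ^ d"
  shows "a ^ d / 2 \<le> x \<and> x \<le> 2 * a ^ d \<and> 2 * (a * b ^ (d - 1)) \<le> x"
proof -
  define t where "t = a ^ d"
  have t0: "t > 0" using a by (simp add: t_def)
  have p8: "(2::real) ^ d \<ge> 8"
  proof -
    have "(2::real) ^ 3 \<le> 2 ^ d" using d by (intro power_increasing) auto
    thus ?thesis by simp
  qed
  have p4: "(2::real) ^ (d - 1) \<ge> 4"
  proof -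
    have "(2::real) ^ 2 \<le> 2 ^ (d - 1)" using d by (intro power_increasing) auto
    thus ?thesis by simp
  qed
  have "b ^ d \<le> (a / 2) ^ d" using b by (intro power_mono) auto
  also have "\<dots> = t / 2 ^ d" by (simp add: t_def power_divide)
  also have "\<dots> \<le> t / 8" using t0 p8 by (intro divide_left_mono) auto
  finally have bd: "b ^ d \<le> t / 8" .
  have "b ^ (d - 1) \<le> (a / 2) ^ (d - 1)" using b by (intro power_mono) auto
  hence "a * b ^ (d - 1) \<le> a * (a / 2) ^ (d - 1)" using a by (intro mult_left_mono) auto
  also have "\<dots> = t / 2 ^ (d - 1)"
    using d by (simp add: t_def power_divide power_Suc[symmetric])
  also have "\<dots> \<le> t / 4" using t0 p4 by (intro divide_left_mono) auto
  finally have bb: "a * b ^ (d - 1) \<le> t / 4" .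
  have lb: "l * b ^ d \<le> t / 16"
  proof -
    have "l * b ^ d \<le> (1/2) * (t / 8)" using l bd b by (intro mult_mono) auto
    thus ?thesis by simp
  qed
  have lb0: "l * b ^ d \<ge> 0" using l b by simp
  show ?thesis using x1 x2 lb lb0 bb t0 unfolding t_def[symmetric] by auto
qed

theorem proposition6p1:
  fixes d :: nat and alpha lam :: complex and v :: "complex \<Rightarrow> real" and n0 :: nat
  assumes "d > 2"
    and "alpha \<in> Qbar" and "lam \<in> Qbar"
    and "is_abs_value_Qbar v"
    and "v alpha \<ge> 2" and "v lam \<le> 1/2"
  shows "convergent (\<lambda>n. ln (M_seq v d alpha lam n) / real d ^ n)
    \<and> \<bar>lim (\<lambda>n. ln (M_seq v d alpha lam n) / real d ^ n)
         - ln (M_seq v d alpha lam n0) / real d ^ n0\<bar>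
       \<le> ln 2 / (real d ^ n0 * (real d - 1))"
proof -
  note d = assms(1) and v = assms(4)
  have aa: "algebraic alpha" and al: "algebraic lam" using assms(2,3) by (auto simp: Qbar_def)
  define A where "A = A_seq d alpha lam"
  define B where "B = B_seq d alpha lam"
  have algA: "algebraic (A n)" and algB: "algebraic (B n)" for n
    using AB_alg[OF aa al] by (auto simp: A_def B_def)
  define a where "a n = v (A n)" for n
  define b where "b n = v (B n)" for n
  define l where "l = v lam"
  have l: "0 \<le> l" "l \<le> 1/2" using v_nonneg[OF v al] assms(6) by (auto simp: l_def)
  have bnn: "b n \<ge> 0" for n using v_nonneg[OF v algB] by (simp add: b_def)
  have rec: "v (A (Suc n)) \<le> a n ^ d + l * b n ^ d \<and> v (A (Suc n)) \<ge> a n ^ d - l * b n ^ d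
        \<and> b (Suc n) = a n * b n ^ (d - 1)" for n
  proof -
    have e1: "v (A n ^ d) = a n ^ d" using v_pow[OF v algA] by (simp add: a_def)
    have e2: "v (lam * B n ^ d) = l * b n ^ d"
      using v_mult[OF v al alg_pow[OF algB]] v_pow[OF v algB] by (simp add: l_def b_def)
    have g1: "algebraic (A n ^ d)" by (rule alg_pow[OF algA])
    have g2: "algebraic (lam * B n ^ d)" using alg_plus_times[OF al alg_pow[OF algB]] by simp
    have AS: "A (Suc n) = A n ^ d + lam * B n ^ d" by (simp add: A_def B_def A_Suc)
    have BS: "B (Suc n) = A n * B n ^ (d - 1)" by (simp add: A_def B_def B_Suc)
    show ?thesis
      using v_add[OF v g1 g2] v_rev[OF v g1 g2] e1 e2 AS BS
        v_mult[OF v algA alg_pow[OF algB]] v_pow[OF v algB]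
      by (simp add: a_def b_def)
  qed
  have inv: "a n > 0 \<and> 2 * b n \<le> a n" for n
  proof (induction n)
    case 0
    show ?case using assms(5) by (simp add: a_def b_def A_def B_def A0 B0 v_one[OF v])
  next
    case (Suc n)
    have "a n ^ d / 2 \<le> a (Suc n) \<and> a (Suc n) \<le> 2 * a n ^ d \<and> 2 * (a n * b n ^ (d - 1)) \<le> a (Suc n)"
      using real_step[of d "a n" "b n" l "a (Suc n)"] d bnn[of n] l Suc rec[of n] by (simp add: a_def)
    moreover have "a n ^ d > 0" using Suc by simp
    ultimately show ?case using rec[of n] by auto
  qed
  have Ma: "M_seq v d alpha lam n = a n" for n
    using inv[of n] bnn[of n] by (simp add: M_seq_def a_def b_def A_def B_def max_def)
  have lnstep: "\<bar>ln (a (Suc n)) - real d * ln (a n)\<bar> \<le> ln 2" for n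
  proof -
    have bnd: "a n ^ d / 2 \<le> a (Suc n) \<and> a (Suc n) \<le> 2 * a n ^ d"
      using real_step[of d "a n" "b n" l "a (Suc n)"] d bnn[of n] l inv[of n] rec[of n] by (simp add: a_def)
    have an: "a n > 0" using inv by simp
    have pos: "a n ^ d > 0" using an by simp
    have "ln (a (Suc n)) \<le> ln (2 * a n ^ d)" using bnd pos by (subst ln_le_cancel_iff) auto
    also have "\<dots> = ln 2 + real d * ln (a n)" using pos an by (simp add: ln_mult ln_realpow)
    finally have u: "ln (a (Suc n)) \<le> ln 2 + real d * ln (a n)" .
    have "ln (a n ^ d / 2) \<le> ln (a (Suc n))" using bnd pos by (subst ln_le_cancel_iff) auto
    also have "ln (a n ^ d / 2) = real d * ln (a n) - ln 2" using pos an by (simp add: ln_div ln_realpow)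
    finally show ?thesis using u by auto
  qed
  define L where "L n = ln (M_seq v d alpha lam n) / real d ^ n" for n
  have Lstep: "\<bar>L (Suc n) - L n\<bar> \<le> ln 2 / real d ^ Suc n" for n
  proof -
    have dp: "real d ^ n > 0" using d by simp
    have "L (Suc n) - L n = (ln (a (Suc n)) - real d * ln (a n)) / real d ^ Suc n"
      using dp d by (simp add: L_def Ma field_simps)
    thus ?thesis using lnstep[of n] dp d by (simp add: abs_divide divide_right_mono)
  qed
  have "convergent L \<and> \<bar>lim L - L n0\<bar> \<le> ln 2 / (real d ^ n0 * (real d - 1))"
    by (rule seq_bound) (use d Lstep in auto)
  thus ?thesis unfolding L_def .
qed

end
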